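(* Let $\operatorname{rk}L=2$ with basis $e_1,e_2$, $x_i=X^{f_i}$ for the dual basis, $k=\omega(e_1,e_2)\neq0$, and let $m_1\ge1$, $m_2\ge0$. Let $\Sigma=\{m_1\times e_2,\ m_2\times(-e_2)\}$ and let $\Sigma'=\{(m_1-1)\times e_2,\ (m_2+1)\times(-e_2)\}$ be its mutation in (one copy of) $e_2$. Then $\mathcal U(\Sigma)=\mu_{e_2}^*\bigl(\mathcal U(\Sigma')\bigr)$, where $\mu_{e_2}^*$ is the substitution $x_1\mapsto x_1$, $x_2\mapsto x_2/(1+x_1^k)$.
   Context: For a lattice $L$ with skew-symmetric integral bilinear form $\omega$: $L^*=\mathrm{Hom}(L,\mathbb Z)$, $(\cdot,\cdot)$ the canonical pairing; $\mathcal Q=\mathbb Q(e^{2\pi i\mathbb Q})$ is $\mathbb Q$ with all roots of unity adjoined; $\mathcal Q[L^*]$ is the group algebra of $L^*$ with monomials $X^m$, and $\mathbb K_L$ its fraction field. For $v\in L$, $\mu_v^*$ is the $\mathcal Q$-algebra automorphism of $\mathbb K_L$ with $\mu_v^*(X^m)=X^m(1+X^{\omega(\cdot,v)})^{-(m,v)}$, where $\omega(\cdot,v)\in L^*$ is $w\mapsto\omega(w,v)$. An exchange collection is a finite tuple of vectors with multiplicity function $m_V$; $\{m_1\times u_1,m_2\times u_2\}$ denotes the collection with $u_j$ of multiplicity $m_j$. The upper bound is $\mathcal U(V)=\mathcal Q[L^*]\cap\bigcap_{v\in L}(\mu_v^* )^{m_V(v)}(\mathcal Q[L^*])\subset\mathbb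 K_L$. *)

theory Defs
  imports Complex_Main "HOL-Computational_Algebra.Polynomial" "HOL-Computational_Algebra.Fraction_Field"
begin

text \<open>Rank 2 lattice L = Z x Z in the basis e1, e2; the dual lattice L* = Z x Z in the
  dual basis f1, f2.  The skew form is determined by k = omega(e1,e2).\<close>

type_synonym lat = "int \<times> int"

definition pairing :: "lat \<Rightarrow> lat \<Rightarrow> int" where
  "pairing m v = fst m * fst v + snd m * snd v"

definition omega :: "int \<Rightarrow> lat \<Rightarrow> lat \<Rightarrow> int" where
  "omega k v w = k * (fst v * snd w - snd v * fst w)"

definition omega_dual :: "int \<Rightarrow> lat \<Rightarrow> lat" where
  "omega_dual k v = (omega k (1,0) v, omega k (0,1) v)"

definition Qcyc :: "complex set" where
  "Qcyc = \<Inter>{F. 0 \<in> F \<and> 1 \<in> F \<and> (\<forall>x\<in>F. \<forall>y\<in>F. x + y \<in> F \<and> x * y \<in> F)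
              \<and> (\<forall>x\<in>F. - x \<in> F \<and> inverse x \<in> F) \<and> {z. \<exists>n>0. z ^ n = 1} \<subseteq> F}"

text \<open>Ambient field C(x1,x2) = Frac(C[x1][x2]); it contains K_L = Frac(Qcyc[L*]).
  The outer polynomial variable is x2, the inner one x1.\<close>
type_synonym KL = "complex poly poly fract"

definition X1 :: KL where "X1 = Fract [:[:0, 1:]:] 1"
definition X2 :: KL where "X2 = Fract [:0, 1:] 1"

definition Xmon :: "lat \<Rightarrow> KL" where
  "Xmon m = X1 powi fst m * X2 powi snd m"

definition LaurentQ :: "KL set" where
  "LaurentQ = {Fract p 1 * Xmon m | p m. \<forall>i j. coeff (coeff p i) j \<in> Qcyc}"

definition polyeval :: "KL \<Rightarrow> KL \<Rightarrow> complex poly poly \<Rightarrow> KL" where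
  "polyeval a b p = poly (map_poly (\<lambda>q. poly (map_poly (\<lambda>c. Fract [:[:c:]:] 1) q) a) p) b"

definition subst :: "KL \<Rightarrow> KL \<Rightarrow> KL \<Rightarrow> KL" where
  "subst a b r = (let (p, q) = (SOME (p, q). q \<noteq> 0 \<and> r = Fract p q)
                  in polyeval a b p / polyeval a b q)"

text \<open>mu_v^*(X^m) = X^m (1 + X^{omega(.,v)})^{-(m,v)}, determined by its values on x1, x2.\<close>
definition mu :: "int \<Rightarrow> lat \<Rightarrow> KL \<Rightarrow> KL" where
  "mu k v = subst
     (Xmon (1,0) * (1 + Xmon (omega_dual k v)) powi (- pairing (1,0) v))
     (Xmon (0,1) * (1 + Xmon (omega_dual k v)) powi (- pairing (0,1) v))"

text \<open>Exchange collections as finite lists of vectors; multiplicity function.\<close>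
definition mult :: "lat list \<Rightarrow> lat \<Rightarrow> nat" where
  "mult V v = length (filter (\<lambda>u. u = v) V)"

definition upper_bound :: "int \<Rightarrow> lat list \<Rightarrow> KL set" where
  "upper_bound k V = LaurentQ \<inter> (\<Inter>v. (mu k v ^^ mult V v) ` LaurentQ)"

end

theory Submission
  imports Defs
begin


definition cc :: "complex poly \<Rightarrow> KL" where "cc q = Fract [:q:] 1"
definition C2 :: "complex poly poly \<Rightarrow> KL" where "C2 p = Fract p 1"

lemma C2_add: "C2 (p + q) = C2 p + C2 q" by (simp add: C2_def)
lemma C2_mult: "C2 (p * q) = C2 p * C2 q" by (simp add: C2_def)
lemma C2_0[simp]: "C2 0 = 0" by (simp add: C2_def fract_collapse)
lemma C2_1[simp]: "C2 1 = 1" by (simp add: C2_def fract_collapse)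
lemma C2_eq0: "C2 p = 0 \<longleftrightarrow> p = 0"
  by (simp add: C2_def Zero_fract_def eq_fract)
lemma C2_power: "C2 (p ^ n) = C2 p ^ n" by (induct n) (simp_all add: C2_mult)
lemma cc_C2: "cc q = C2 [:q:]" by (simp add: cc_def C2_def)
lemma cc_add: "cc (p + q) = cc p + cc q" by (simp add: cc_def)
lemma cc_mult: "cc (p * q) = cc p * cc q" by (simp add: cc_def mult.commute)
lemma cc_0[simp]: "cc 0 = 0" by (simp add: cc_C2)
lemma cc_1[simp]: "cc 1 = 1" by (simp add: cc_C2 pCons_one)
lemma cc_eq0: "cc p = 0 \<longleftrightarrow> p = 0" by (simp add: cc_C2 C2_eq0)
lemma cc_power: "cc (p ^ n) = cc p ^ n" by (induct n) (simp_all add: cc_mult)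

lemma hom_poly:
  fixes h :: "'a::comm_ring_1 \<Rightarrow> 'b::comm_ring_1"
  assumes "\<And>x y. h (x+y) = h x + h y" "\<And>x y. h (x*y) = h x * h y" "h 0 = 0"
  shows "h (poly p x) = poly (map_poly h p) (h x)"
proof (induct p rule: pCons_induct)
  case 0 then show ?case using assms by simp
next
  case (pCons a p) then show ?case using assms by (simp add: map_poly_pCons)
qed

lemma map_poly_add_hom:
  assumes "\<And>x y. h (x+y) = h x + h y" "h 0 = 0"
  shows "map_poly h (p + q) = map_poly h p + map_poly h q"
  by (intro poly_eqI) (simp add: coeff_map_poly assms)

lemma map_poly_mult_hom:
  fixes h :: "'a::comm_ring_1 \<Rightarrow> 'b::comm_ring_1"
  assumes "\<And>x y. h (x+y) = h x + h y" "\<And>x y. h (x*y) = h x * h y" "h 0 = 0"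
  shows "map_poly h (p * q) = map_poly h p * map_poly h q"
proof (induct p rule: pCons_induct)
  case 0 then show ?case using assms by simp
next
  case (pCons a p)
  have "map_poly h (pCons a p * q) = map_poly h (smult a q + pCons 0 (p * q))" by simp
  also have "\<dots> = smult (h a) (map_poly h q) + pCons 0 (map_poly h p * map_poly h q)"
    by (simp add: map_poly_add_hom assms map_poly_smult map_poly_pCons pCons.hyps)
  also have "\<dots> = map_poly h (pCons a p) * map_poly h q"
    by (simp add: map_poly_pCons assms)
  finally show ?case .
qed

definition E :: "KL \<Rightarrow> complex poly poly \<Rightarrow> KL" where
  "E b p = poly (map_poly cc p) b"

lemma E_add: "E b (p + q) = E b p + E b q"
  by (simp add: E_def map_poly_add_hom cc_add)
lemma E_mult: "E b (p * q) = E b p * E b q"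
  by (simp add: E_def map_poly_mult_hom cc_add cc_mult)
lemma E_0[simp]: "E b 0 = 0" by (simp add: E_def)
lemma E_1[simp]: "E b 1 = 1" by (simp add: E_def map_poly_pCons pCons_one)
lemma E_const[simp]: "E b [:a:] = cc a" by (simp add: E_def map_poly_pCons)

lemma inner_eval: "poly (map_poly (\<lambda>c. Fract [:[:c:]:] 1) q) X1 = cc q"
proof -
  have "cc q = cc (poly (map_poly (\<lambda>x. [:x:]) q) [:0,1:])"
    by (simp flip: pcompose_altdef)
  also have "\<dots> = poly (map_poly cc (map_poly (\<lambda>x. [:x:]) q)) (cc [:0,1:])"
    by (rule hom_poly) (simp_all add: cc_add cc_mult)
  also have "\<dots> = poly (map_poly (\<lambda>c. Fract [:[:c:]:] 1) q) X1"
    by (subst map_poly_map_poly) (simp_all add: fract_collapse o_def cc_def X1_def)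
  finally show ?thesis by simp
qed

lemma polyeval_X1: "polyeval X1 b p = E b p"
  unfolding polyeval_def E_def inner_eval by simp

lemma E_X2: "E X2 p = C2 p"
proof -
  have "C2 p = C2 (poly (map_poly (\<lambda>x. [:x:]) p) [:0,1:])"
    by (simp flip: pcompose_altdef)
  also have "\<dots> = poly (map_poly C2 (map_poly (\<lambda>x. [:x:]) p)) (C2 [:0,1:])"
    by (rule hom_poly) (simp_all add: C2_add C2_mult)
  also have "\<dots> = E X2 p"
    by (subst map_poly_map_poly) (simp_all add: fract_collapse o_def E_def cc_def[abs_def] X2_def C2_def)
  finally show ?thesis by simp
qed



definition K0 :: "KL set" where "K0 = {cc a / cc b | a b. b \<noteq> 0}"

lemma K0_cc[simp]: "cc a \<in> K0"
  unfolding K0_def by (rule CollectI, rule exI[of _ a], rule exI[of _ 1]) simp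

lemma K0_0[simp]: "0 \<in> K0" using K0_cc[of 0] by simp
lemma K0_1[simp]: "1 \<in> K0" using K0_cc[of 1] by simp

lemma K0_E: assumes "x \<in> K0" obtains a b where "b \<noteq> 0" "x = cc a / cc b"
  using assms unfolding K0_def by blast

lemma K0_I: "b \<noteq> 0 \<Longrightarrow> x = cc a / cc b \<Longrightarrow> x \<in> K0"
  unfolding K0_def by blast

lemma K0_add[simp]: "x \<in> K0 \<Longrightarrow> y \<in> K0 \<Longrightarrow> x + y \<in> K0"
proof -
  assume "x \<in> K0" "y \<in> K0"
  then obtain a b a' b' where "b \<noteq> 0" "b' \<noteq> 0" "x = cc a / cc b" "y = cc a' / cc b'"
    by (metis K0_E)
  then show ?thesis
    by (intro K0_I[of "b * b'" _ "a * b' + a' * b"]) (auto simp: cc_add cc_mult cc_eq0 field_simps)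
qed

lemma K0_mult[simp]: "x \<in> K0 \<Longrightarrow> y \<in> K0 \<Longrightarrow> x * y \<in> K0"
proof -
  assume "x \<in> K0" "y \<in> K0"
  then obtain a b a' b' where "b \<noteq> 0" "b' \<noteq> 0" "x = cc a / cc b" "y = cc a' / cc b'"
    by (metis K0_E)
  then show ?thesis
    by (intro K0_I[of "b * b'" _ "a * a'"]) (simp_all add: cc_mult)
qed

lemma cc_uminus: "cc (- a) = - cc a" by (simp add: cc_def)

lemma K0_uminus[simp]: "x \<in> K0 \<Longrightarrow> - x \<in> K0"
proof -
  assume "x \<in> K0"
  then obtain a b where "b \<noteq> 0" "x = cc a / cc b" by (metis K0_E)
  then show ?thesis
    by (intro K0_I[of "b" _ "- a"]) (simp_all add: cc_uminus)
qed

lemma K0_inverse[simp]: "x \<in> K0 \<Longrightarrow> inverse x \<in> K0"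
proof -
  assume "x \<in> K0"
  then obtain a b where "b \<noteq> 0" "x = cc a / cc b" by (metis K0_E)
  show ?thesis
  proof (cases "a = 0")
    case True then show ?thesis using \<open>x = _\<close> by simp
  next
    case False
    then show ?thesis using \<open>x = _\<close> by (intro K0_I[of a _ b]) (auto simp: cc_eq0)
  qed
qed

lemma K0_diff[simp]: "x \<in> K0 \<Longrightarrow> y \<in> K0 \<Longrightarrow> x - y \<in> K0"
  using K0_add K0_uminus by (metis diff_conv_add_uminus)
lemma K0_divide[simp]: "x \<in> K0 \<Longrightarrow> y \<in> K0 \<Longrightarrow> x / y \<in> K0"
  by (simp add: divide_inverse)
lemma K0_power[simp]: "x \<in> K0 \<Longrightarrow> x ^ n \<in> K0"
  by (induct n) simp_all
lemma K0_powi[simp]: "x \<in> K0 \<Longrightarrow> x powi n \<in> K0"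
  by (simp add: power_int_def)
lemma K0_sum[simp]: "(\<And>i. i \<in> A \<Longrightarrow> f i \<in> K0) \<Longrightarrow> sum f A \<in> K0"
  by (induct A rule: infinite_finite_induct) simp_all

lemma X1_cc: "X1 = cc [:0,1:]" by (simp add: X1_def cc_def)
lemma X2_C2: "X2 = C2 [:0,1:]" by (simp add: X2_def C2_def)
lemma X1_K0[simp]: "X1 \<in> K0" by (simp add: X1_cc)
lemma X1_ne0[simp]: "X1 \<noteq> 0" by (simp add: X1_cc cc_eq0)
lemma X2_ne0[simp]: "X2 \<noteq> 0" by (simp add: X2_C2 C2_eq0)

lemma common_denom:
  assumes "finite B" "\<And>i. i \<in> B \<Longrightarrow> s i \<in> K0"
  shows "\<exists>D e. D \<noteq> 0 \<and> (\<forall>i\<in>B. s i * cc D = cc (e i))"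
  using assms
proof (induct B rule: finite_induct)
  case empty
  then show ?case by (intro exI[of _ 1]) simp
next
  case (insert x F)
  then obtain D e where De: "D \<noteq> 0" "\<forall>i\<in>F. s i * cc D = cc (e i)" by auto
  obtain a b where ab: "b \<noteq> 0" "s x = cc a / cc b" using insert(4) by (metis insertI1 K0_E)
  have "cc b \<noteq> 0" using ab by (simp add: cc_eq0)
  let ?e = "\<lambda>i. if i = x then a * D else e i * b"
  have "\<forall>i\<in>insert x F. s i * cc (D * b) = cc (?e i)"
  proof
    fix i assume "i \<in> insert x F"
    then show "s i * cc (D * b) = cc (?e i)"
    proof
      assume "i = x" then show ?thesis using ab \<open>cc b \<noteq> 0\<close> by (simp add: cc_mult)
    next
      assume "i \<in> F" then show ?thesis using De insert(2)
        by (auto simp: cc_mult)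
    qed
  qed
  then show ?case using De ab by (intro exI[of _ "D * b"] exI[of _ ?e]) simp
qed

lemma C2_monom: "cc e * X2 ^ i = C2 (monom e i)"
proof -
  have "monom e i = [:e:] * [:0,1:]^i" by (simp add: monom_altdef)
  then show ?thesis by (simp only: cc_C2 X2_C2 C2_mult C2_power)
qed
    


lemma uniq_nat:
  assumes "finite B" "\<And>i. i \<in> B \<Longrightarrow> s i \<in> K0" "(\<Sum>i\<in>B. s i * X2 ^ i) = 0"
  shows "\<forall>i\<in>B. s i = 0"
proof -
  obtain D e where De: "D \<noteq> 0" "\<forall>i\<in>B. s i * cc D = cc (e i)"
    using common_denom[of B s] assms(1,2) by blast
  have "C2 (\<Sum>i\<in>B. monom (e i) i) = (\<Sum>i\<in>B. cc (e i) * X2 ^ i)"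
    by (induct B rule: infinite_finite_induct) (simp_all add: C2_add C2_monom)
  also have "\<dots> = (\<Sum>i\<in>B. s i * X2 ^ i) * cc D"
    unfolding sum_distrib_right
    by (rule sum.cong) (simp_all add: De(2)[rule_format, symmetric] mult_ac)
  finally have "(\<Sum>i\<in>B. monom (e i) i) = 0" using assms(3) by (simp add: C2_eq0)
  then have "\<forall>j. coeff (\<Sum>i\<in>B. monom (e i) i) j = 0" by simp
  then have "\<forall>j\<in>B. e j = 0"
    by (simp add: coeff_sum assms(1) if_distrib cong: if_cong) (metis (full_types))
  then show ?thesis using De by (metis cc_0 cc_eq0 mult_eq_0_iff)
qed

lemma X2_powi_split: "b \<le> n \<Longrightarrow> X2 powi n = X2 powi b * X2 ^ nat (n - b)"
proof -
  assume "b \<le> n"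
  then have "X2 powi n = X2 powi (b + int (nat (n - b)))" by simp
  also have "\<dots> = X2 powi b * X2 powi (int (nat (n - b)))"
    by (rule power_int_add) simp
  also have "\<dots> = X2 powi b * X2 ^ nat (n - b)"
    by (simp only: power_int_of_nat)
  finally show ?thesis .
qed

lemma uniq_int:
  assumes "finite A" "\<And>n. n \<in> A \<Longrightarrow> r n \<in> K0" "(\<Sum>n\<in>A. r n * X2 powi n) = 0"
  shows "\<forall>n\<in>A. r n = 0"
proof (cases "A = {}")
  case True then show ?thesis by simp
next
  case False
  define b where "b = Min A"
  have bA: "\<And>n. n \<in> A \<Longrightarrow> b \<le> n" using assms(1) by (simp add: b_def)
  define h where "h n = nat (n - b)" for n
  define s where "s i = r (int i + b)" for i
  have inj: "inj_on h A"
  proof (rule inj_onI)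
    fix x y assume "x \<in> A" "y \<in> A" "h x = h y"
    then have "int (nat (x - b)) = int (nat (y - b))" by (simp add: h_def)
    then show "x = y" using bA[OF \<open>x \<in> A\<close>] bA[OF \<open>y \<in> A\<close>] by simp
  qed
  have rs: "\<And>n. n \<in> A \<Longrightarrow> r n = s (h n)" using bA by (simp add: s_def h_def)
  have "0 = (\<Sum>n\<in>A. r n * X2 powi n)" using assms(3) by simp
  also have "\<dots> = X2 powi b * (\<Sum>n\<in>A. s (h n) * X2 ^ h n)"
    unfolding sum_distrib_left
    by (rule sum.cong) (simp_all add: rs h_def X2_powi_split[OF bA] mult_ac)
  also have "(\<Sum>n\<in>A. s (h n) * X2 ^ h n) = (\<Sum>i\<in>h ` A. s i * X2 ^ i)"
    by (simp add: sum.reindex[OF inj])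
  finally have "(\<Sum>i\<in>h ` A. s i * X2 ^ i) = 0" by simp
  moreover have "\<And>i. i \<in> h ` A \<Longrightarrow> s i \<in> K0" using assms(2) rs by auto
  ultimately have "\<forall>i\<in>h ` A. s i = 0" using uniq_nat[of "h ` A" s] assms(1) by blast
  then show ?thesis using rs by auto
qed



lemma E_sum: "E b p = (\<Sum>i\<le>degree p. cc (coeff p i) * b ^ i)"
proof -
  have "degree (map_poly cc p) = degree p" by (rule degree_map_poly) (simp add: cc_eq0)
  then show ?thesis by (simp add: E_def poly_altdef coeff_map_poly)
qed

lemma E_ne0:
  assumes "w \<in> K0" "w \<noteq> 0" "p \<noteq> 0"
  shows "E (X2 * w) p \<noteq> 0"
proof
  assume "E (X2 * w) p = 0"
  moreover have "E (X2 * w) p = (\<Sum>i\<le>degree p. (cc (coeff p i) * w ^ i) * X2 ^ i)"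
    unfolding E_sum by (rule sum.cong) (simp_all add: power_mult_distrib)
  ultimately have "(\<Sum>i\<le>degree p. (cc (coeff p i) * w ^ i) * X2 ^ i) = 0"
    by simp
  then have "\<forall>i\<in>{..degree p}. cc (coeff p i) * w ^ i = 0"
    by (intro uniq_nat) (use assms in simp_all)
  then have "cc (coeff p (degree p)) = 0" using assms by simp
  then show False using assms by (simp add: cc_eq0)
qed

definition S :: "KL \<Rightarrow> KL \<Rightarrow> KL" where "S w = subst X1 (X2 * w)"

definition good :: "KL \<Rightarrow> bool" where "good w \<longleftrightarrow> w \<in> K0 \<and> w \<noteq> 0"

lemma S_Fract:
  assumes "good w" "q \<noteq> 0"
  shows "S w (Fract p q) = E (X2 * w) p / E (X2 * w) q"
proof -
  define pq where "pq = (SOME (p', q'). q' \<noteq> 0 \<and> Fract p q = Fract p' q')"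
  have "snd pq \<noteq> 0 \<and> Fract p q = Fract (fst pq) (snd pq)"
    unfolding pq_def by (rule someI2[of _ "(p, q)"]) (use assms in auto)
  then have h: "snd pq \<noteq> 0" "p * snd pq = fst pq * q" using assms(2) by (auto simp: eq_fract)
  have ne: "E (X2 * w) q \<noteq> 0" "E (X2 * w) (snd pq) \<noteq> 0"
    using E_ne0 assms h(1) unfolding good_def by auto
  have "S w (Fract p q) = E (X2 * w) (fst pq) / E (X2 * w) (snd pq)"
    unfolding S_def subst_def pq_def[symmetric] by (simp add: polyeval_X1 split: prod.splits)
  also have "\<dots> = E (X2 * w) p / E (X2 * w) q"
    using ne arg_cong[OF h(2), of "E (X2 * w)"]
    by (simp add: E_mult frac_eq_eq mult.commute)
  finally show ?thesis .
qed

lemma Fract_C2: "Fract p q = C2 p / C2 q"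
  by (cases "q = 0") (simp_all add: C2_def fract_collapse)



lemma E_uminus: "E b (- p) = - E b p"
  using E_add[of b p "- p"] by (simp add: eq_neg_iff_add_eq_0 add.commute)

lemma good_mult[simp]: "good u \<Longrightarrow> good v \<Longrightarrow> good (u * v)" by (simp add: good_def)
lemma good_inverse[simp]: "good u \<Longrightarrow> good (inverse u)" by (simp add: good_def)
lemma good_power[simp]: "good u \<Longrightarrow> good (u ^ n)" by (simp add: good_def)
lemma good_powi[simp]: "good u \<Longrightarrow> good (u powi n)" by (simp add: good_def)
lemma good_1[simp]: "good 1" by (simp add: good_def)

context
  fixes w assumes gw: "good w"
begin

lemma Ene: "q \<noteq> 0 \<Longrightarrow> E (X2 * w) q \<noteq> 0"
  using E_ne0 gw unfolding good_def by blast

lemma S_0[simp]: "S w 0 = 0"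
  using S_Fract[OF gw, of 1 0] by (simp add: fract_collapse)

lemma S_C2: "S w (C2 p) = E (X2 * w) p"
  using S_Fract[OF gw, of 1 p] by (simp add: C2_def)

lemma S_1[simp]: "S w 1 = 1"
  using S_C2[of 1] by simp

lemma S_add: "S w (x + y) = S w x + S w y"
proof (cases x; cases y)
  fix p q p' q' assume h: "x = Fract p q" "q \<noteq> 0" "y = Fract p' q'" "q' \<noteq> 0"
  then show ?thesis
    using Ene[of q] Ene[of q'] by (simp add: S_Fract[OF gw] E_add E_mult add_frac_eq)
qed

lemma S_mult: "S w (x * y) = S w x * S w y"
proof (cases x; cases y)
  fix p q p' q' assume h: "x = Fract p q" "q \<noteq> 0" "y = Fract p' q'" "q' \<noteq> 0"
  then show ?thesis by (simp add: S_Fract[OF gw] E_mult)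
qed

lemma S_uminus: "S w (- x) = - S w x"
proof (cases x)
  fix p q assume h: "x = Fract p q" "q \<noteq> 0"
  then show ?thesis by (simp add: S_Fract[OF gw] E_uminus)
qed

lemma S_diff: "S w (x - y) = S w x - S w y"
  using S_add[of x "- y"] S_uminus[of y] by simp

lemma S_inverse: "S w (inverse x) = inverse (S w x)"
proof (cases x)
  fix p q assume h: "x = Fract p q" "q \<noteq> 0"
  show ?thesis
  proof (cases "p = 0")
    case True then show ?thesis using h by (simp add: fract_collapse)
  next
    case False then show ?thesis using h by (simp add: S_Fract[OF gw])
  qed
qed

lemma S_divide: "S w (x / y) = S w x / S w y"
  by (simp add: divide_inverse S_mult S_inverse)

lemma S_power: "S w (x ^ n) = S w x ^ n"
  by (induct n) (simp_all add: S_mult)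

lemma S_powi: "S w (x powi n) = S w x powi n"
  by (simp add: power_int_def S_power S_inverse)

lemma S_sum: "S w (sum f A) = (\<Sum>a\<in>A. S w (f a))"
  by (induct A rule: infinite_finite_induct) (simp_all add: S_add)

lemma S_cc[simp]: "S w (cc a) = cc a"
  by (simp add: cc_C2 S_C2)

lemma S_K0: "x \<in> K0 \<Longrightarrow> S w x = x"
  by (auto elim!: K0_E simp: S_divide)

lemma S_X1[simp]: "S w X1 = X1"
  by (simp add: X1_cc)

lemma S_X2[simp]: "S w X2 = X2 * w"
  by (simp add: X2_C2 S_C2 E_def map_poly_pCons)

lemma S_E: "good v \<Longrightarrow> S w (E (X2 * v) p) = E (X2 * (w * v)) p"
proof -
  assume gv: "good v"
  have "S w (E (X2 * v) p) = poly (map_poly (S w) (map_poly cc p)) (S w (X2 * v))"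
    unfolding E_def by (rule hom_poly) (simp_all add: S_add S_mult)
  also have "map_poly (S w) (map_poly cc p) = map_poly cc p"
    by (subst map_poly_map_poly) (simp_all add: o_def)
  also have "S w (X2 * v) = X2 * (w * v)"
    using gv by (simp add: S_mult S_K0 good_def mult_ac)
  finally show ?thesis by (simp add: E_def)
qed

end

lemma S_comp:
  assumes "good u" "good v"
  shows "S u (S v x) = S (u * v) x"
proof (cases x)
  fix p q assume h: "x = Fract p q" "q \<noteq> 0"
  then show ?thesis using assms
    by (simp add: S_Fract S_divide S_E)
qed

lemma S_one: "S 1 x = x"
proof (cases x)
  fix p q assume h: "x = Fract p q" "q \<noteq> 0"
  have "S 1 (Fract p q) = E (X2 * 1) p / E (X2 * 1) q" by (rule S_Fract) (simp_all add: h)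
  then show ?thesis using h by (simp add: E_X2 Fract_C2)
qed

lemma S_funpow: "good w \<Longrightarrow> (S w ^^ n) = S (w ^ n)"
proof (induct n)
  case 0 then show ?case by (auto simp: S_one fun_eq_iff)
next
  case (Suc n) then show ?case by (auto simp: S_comp fun_eq_iff)
qed



lemma Qcyc_0[simp]: "0 \<in> Qcyc" unfolding Qcyc_def by auto
lemma Qcyc_1[simp]: "1 \<in> Qcyc" unfolding Qcyc_def by auto
lemma Qcyc_add[simp]: "x \<in> Qcyc \<Longrightarrow> y \<in> Qcyc \<Longrightarrow> x + y \<in> Qcyc" unfolding Qcyc_def by auto
lemma Qcyc_mult[simp]: "x \<in> Qcyc \<Longrightarrow> y \<in> Qcyc \<Longrightarrow> x * y \<in> Qcyc" unfolding Qcyc_def by auto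
lemma Qcyc_sum: "(\<And>i. i \<in> A \<Longrightarrow> f i \<in> Qcyc) \<Longrightarrow> sum f A \<in> Qcyc"
  by (induct A rule: infinite_finite_induct) simp_all

definition Q1 :: "complex poly \<Rightarrow> bool" where "Q1 q \<longleftrightarrow> (\<forall>j. coeff q j \<in> Qcyc)"
definition QP :: "complex poly poly \<Rightarrow> bool" where "QP p \<longleftrightarrow> (\<forall>i. Q1 (coeff p i))"

lemma Q1_0[simp]: "Q1 0" by (simp add: Q1_def)
lemma Q1_1[simp]: "Q1 1" by (simp add: Q1_def coeff_1)
lemma Q1_X[simp]: "Q1 [:0,1:]" by (simp add: Q1_def coeff_pCons split: nat.splits)
lemma Q1_add[simp]: "Q1 p \<Longrightarrow> Q1 q \<Longrightarrow> Q1 (p + q)" by (simp add: Q1_def)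
lemma Q1_mult[simp]: "Q1 p \<Longrightarrow> Q1 q \<Longrightarrow> Q1 (p * q)"
  by (simp add: Q1_def coeff_mult Qcyc_sum)
lemma Q1_power[simp]: "Q1 p \<Longrightarrow> Q1 (p ^ n)" by (induct n) simp_all
lemma Q1_sum: "(\<And>i. i \<in> A \<Longrightarrow> Q1 (f i)) \<Longrightarrow> Q1 (sum f A)"
  by (induct A rule: infinite_finite_induct) simp_all

lemma QP_0[simp]: "QP 0" by (simp add: QP_def)
lemma QP_1[simp]: "QP 1" by (simp add: QP_def coeff_1)
lemma QP_const[simp]: "Q1 q \<Longrightarrow> QP [:q:]" by (simp add: QP_def coeff_pCons split: nat.splits)
lemma QP_X[simp]: "QP [:0,1:]" by (simp add: QP_def coeff_pCons coeff_1 split: nat.splits)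
lemma QP_add[simp]: "QP p \<Longrightarrow> QP q \<Longrightarrow> QP (p + q)" by (simp add: QP_def)
lemma QP_mult[simp]: "QP p \<Longrightarrow> QP q \<Longrightarrow> QP (p * q)"
  by (simp add: QP_def coeff_mult Q1_sum)
lemma QP_power[simp]: "QP p \<Longrightarrow> QP (p ^ n)" by (induct n) simp_all

definition L1 :: "KL set" where "L1 = {cc q * X1 powi a | q a. Q1 q}"

lemma L1_I: "Q1 q \<Longrightarrow> cc q * X1 powi a \<in> L1" unfolding L1_def by blast
lemma L1_E: "x \<in> L1 \<Longrightarrow> (\<And>q a. Q1 q \<Longrightarrow> x = cc q * X1 powi a \<Longrightarrow> P) \<Longrightarrow> P"
  unfolding L1_def by blast

lemma L1_K0: "x \<in> L1 \<Longrightarrow> x \<in> K0" by (auto elim!: L1_E)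
lemma L1_cc: "Q1 q \<Longrightarrow> cc q \<in> L1" using L1_I[of q 0] by simp
lemma L1_0[simp]: "0 \<in> L1" using L1_cc[of 0] by simp
lemma L1_1[simp]: "1 \<in> L1" using L1_cc[of 1] by simp
lemma L1_X1[simp]: "X1 powi a \<in> L1" using L1_I[of 1 a] by simp
lemma L1_mult[simp]: "x \<in> L1 \<Longrightarrow> y \<in> L1 \<Longrightarrow> x * y \<in> L1"
proof -
  assume "x \<in> L1" "y \<in> L1"
  then obtain q a q' a' where "Q1 q" "Q1 q'" "x = cc q * X1 powi a" "y = cc q' * X1 powi a'"
    by (metis L1_E)
  then show ?thesis using L1_I[of "q * q'" "a + a'"]
    by (simp add: cc_mult power_int_add mult_ac)
qed
lemma L1_power[simp]: "x \<in> L1 \<Longrightarrow> x ^ n \<in> L1" by (induct n) simp_all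

lemma powi_split: "(x::KL) \<noteq> 0 \<Longrightarrow> b \<le> n \<Longrightarrow> x powi n = x powi b * x ^ nat (n - b)"
proof -
  assume "x \<noteq> 0" "b \<le> n"
  then have "x powi n = x powi (b + int (nat (n - b)))" by simp
  also have "\<dots> = x powi b * x powi (int (nat (n - b)))"
    by (rule power_int_add) (use \<open>x \<noteq> 0\<close> in simp)
  also have "\<dots> = x powi b * x ^ nat (n - b)"
    by (simp only: power_int_of_nat)
  finally show ?thesis .
qed

lemma LQ_alt: "LaurentQ = {C2 p * X1 powi a * X2 powi b | p a b. QP p}"
  unfolding LaurentQ_def QP_def Q1_def Xmon_def C2_def by (auto simp: mult.assoc)

lemma LQ_I: "QP p \<Longrightarrow> C2 p * X1 powi a * X2 powi b \<in> LaurentQ"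
  unfolding LQ_alt by blast
lemma LQ_E: "x \<in> LaurentQ \<Longrightarrow> (\<And>p a b. QP p \<Longrightarrow> x = C2 p * X1 powi a * X2 powi b \<Longrightarrow> P) \<Longrightarrow> P"
  unfolding LQ_alt by blast

lemma LQ_L1: "x \<in> L1 \<Longrightarrow> x \<in> LaurentQ"
  by (auto elim!: L1_E intro!: LQ_I[of _ _ 0, simplified] simp: cc_C2)

lemma LQ_X2[simp]: "X2 powi n \<in> LaurentQ"
  using LQ_I[of 1 0 n] by simp

lemma LQ_0[simp]: "0 \<in> LaurentQ" using LQ_L1[OF L1_0] .

lemma LQ_mult[simp]: "x \<in> LaurentQ \<Longrightarrow> y \<in> LaurentQ \<Longrightarrow> x * y \<in> LaurentQ"
proof -
  assume "x \<in> LaurentQ" "y \<in> LaurentQ"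
  then obtain p a b p' a' b' where h: "QP p" "QP p'" "x = C2 p * X1 powi a * X2 powi b"
      "y = C2 p' * X1 powi a' * X2 powi b'"
    by (metis LQ_E)
  then show ?thesis using LQ_I[of "p * p'" "a + a'" "b + b'"]
    by (simp add: C2_mult power_int_add mult_ac)
qed

lemma X1_pow: "X1 ^ n = C2 ([:[:0,1:]:] ^ n)"
  by (simp add: X1_cc cc_C2 C2_power)
lemma X2_pow: "X2 ^ n = C2 ([:0,1:] ^ n)"
  by (simp add: X2_C2 C2_power)

lemma LQ_add[simp]: "x \<in> LaurentQ \<Longrightarrow> y \<in> LaurentQ \<Longrightarrow> x + y \<in> LaurentQ"
proof -
  assume "x \<in> LaurentQ" "y \<in> LaurentQ"
  then obtain p a b p' a' b' where h: "QP p" "QP p'" "x = C2 p * X1 powi a * X2 powi b"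
      "y = C2 p' * X1 powi a' * X2 powi b'"
    by (metis LQ_E)
  define a0 where "a0 = min a a'"
  define b0 where "b0 = min b b'"
  define P where "P = p * [:[:0,1:]:] ^ nat (a - a0) * [:0,1:] ^ nat (b - b0)
     + p' * [:[:0,1:]:] ^ nat (a' - a0) * [:0,1:] ^ nat (b' - b0)"
  have "x + y = C2 P * X1 powi a0 * X2 powi b0"
    unfolding h P_def
    by (simp add: powi_split[of X1 a0 a] powi_split[of X1 a0 a'] powi_split[of X2 b0 b]
        powi_split[of X2 b0 b'] a0_def b0_def C2_add C2_mult X1_pow X2_pow algebra_simps)
  moreover have "QP P" using h by (simp add: P_def)
  ultimately show ?thesis using LQ_I by simp
qed

lemma LQ_sum: "(\<And>i. i \<in> A \<Longrightarrow> f i \<in> LaurentQ) \<Longrightarrow> sum f A \<in> LaurentQ"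
  by (induct A rule: infinite_finite_induct) simp_all

lemma expand_LQ:
  assumes "\<And>n. n \<in> A \<Longrightarrow> r n \<in> L1"
  shows "(\<Sum>n\<in>A. r n * X2 powi n) \<in> LaurentQ"
  using assms by (intro LQ_sum LQ_mult LQ_L1 LQ_X2) auto

lemma LQ_expand:
  assumes "x \<in> LaurentQ"
  shows "\<exists>A r. finite A \<and> (\<forall>n. r n \<in> L1) \<and> x = (\<Sum>n\<in>A. r n * X2 powi n)"
proof -
  obtain p a b where h: "QP p" "x = C2 p * X1 powi a * X2 powi b"
    using assms by (metis LQ_E)
  define h where "h i = int i + b" for i :: nat
  define r where "r n = cc (coeff p (nat (n - b))) * X1 powi a" for n
  have inj: "inj_on h {..degree p}" by (simp add: h_def inj_on_def)
  have r1: "\<forall>n. r n \<in> L1" using h(1) by (auto simp: r_def QP_def intro: L1_I)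
  have "x = (\<Sum>i\<le>degree p. cc (coeff p i) * X2 ^ i) * X1 powi a * X2 powi b"
    by (simp add: h(2) flip: E_X2 E_sum)
  also have "\<dots> = (\<Sum>i\<le>degree p. r (h i) * X2 powi (h i))"
    unfolding sum_distrib_right
  proof (rule sum.cong)
    fix i assume "i \<in> {..degree p}"
    have "X2 powi (h i) = X2 ^ i * X2 powi b"
      by (simp add: h_def power_int_add power_int_of_nat flip: power_int_of_nat)
    then show "cc (coeff p i) * X2 ^ i * X1 powi a * X2 powi b = r (h i) * X2 powi (h i)"
      by (simp add: r_def h_def mult_ac)
  qed simp
  also have "\<dots> = (\<Sum>n\<in>h ` {..degree p}. r n * X2 powi n)"
    by (simp add: sum.reindex[OF inj])
  finally show ?thesis using r1 by blast
qed



lemma S_expand: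
  assumes "good w" "\<And>n. n \<in> A \<Longrightarrow> r n \<in> K0"
  shows "S w (\<Sum>n\<in>A. r n * X2 powi n) = (\<Sum>n\<in>A. (r n * w powi n) * X2 powi n)"
  unfolding S_sum[OF assms(1)]
  by (rule sum.cong) (simp_all add: S_mult[OF assms(1)] S_K0[OF assms(1)] assms(2)
       S_powi[OF assms(1)] S_X2[OF assms(1)] power_int_mult_distrib mult_ac)

lemma coef_unique:
  assumes "finite A" "finite A'" "\<And>n. n \<in> A \<Longrightarrow> r n \<in> K0" "\<And>n. n \<in> A' \<Longrightarrow> r' n \<in> K0"
    "(\<Sum>n\<in>A. r n * X2 powi n) = (\<Sum>n\<in>A'. r' n * X2 powi n)"
  shows "\<forall>n\<in>A. r n = (if n \<in> A' then r' n else 0)"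
proof -
  define B where "B = A' \<union> A"
  have fB: "finite B" using assms by (simp add: B_def)
  define d where "d n = (if n \<in> A then r n else 0) - (if n \<in> A' then r' n else 0)" for n
  have s1: "(\<Sum>n\<in>B. (if n \<in> A then r n else 0) * X2 powi n) = (\<Sum>n\<in>A. r n * X2 powi n)"
  proof -
    have "(\<Sum>n\<in>B. (if n \<in> A then r n else 0) * X2 powi n) = (\<Sum>n\<in>B. if n \<in> A then r n * X2 powi n else 0)"
      by (rule sum.cong) auto
    also have "\<dots> = (\<Sum>n\<in>B \<inter> A. r n * X2 powi n)" by (rule sum.inter_restrict[symmetric, OF fB])
    also have "B \<inter> A = A" by (auto simp: B_def)
    finally show ?thesis .
  qed
  have s2: "(\<Sum>n\<in>B. (if n \<in> A' then r' n else 0) * X2 powi n) = (\<Sum>n\<in>A'. r' n * X2 powi n)"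
  proof -
    have "(\<Sum>n\<in>B. (if n \<in> A' then r' n else 0) * X2 powi n) = (\<Sum>n\<in>B. if n \<in> A' then r' n * X2 powi n else 0)"
      by (rule sum.cong) auto
    also have "\<dots> = (\<Sum>n\<in>B \<inter> A'. r' n * X2 powi n)" by (rule sum.inter_restrict[symmetric, OF fB])
    also have "B \<inter> A' = A'" by (auto simp: B_def)
    finally show ?thesis .
  qed
  have z: "(\<Sum>n\<in>B. d n * X2 powi n) = 0"
    using assms(5) s1 s2 by (simp add: d_def left_diff_distrib sum_subtractf del: of_int_diff)
  have k: "\<And>n. n \<in> B \<Longrightarrow> d n \<in> K0" using assms(3,4) by (simp add: d_def)
  have "\<forall>n\<in>B. d n = 0" by (rule uniq_int[OF fB k z])
  then show ?thesis
  proof (intro ballI)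
    fix n assume n: "n \<in> A" "\<forall>n\<in>B. d n = 0"
    then have "d n = 0" by (auto simp: B_def)
    then show "r n = (if n \<in> A' then r' n else 0)" using n(1) by (simp add: d_def split: if_splits)
  qed
qed

lemma inv_powi_pos: "(inverse (D::KL) ^ j) powi (int N) = inverse (D ^ (j * N))"
  by (simp add: power_int_of_nat power_mult power_inverse)

lemma inv_powi_neg: "D \<noteq> 0 \<Longrightarrow> (inverse (D::KL) ^ j) powi (- int N) = D ^ (j * N)"
  by (simp add: power_int_minus power_int_of_nat power_mult power_inverse)

lemma aux: "(b::'a::field) \<noteq> 0 \<Longrightarrow> inverse a = inverse (a * b) * b"
  by (simp add: inverse_mult_distrib mult.assoc)

lemma convex:
  assumes D: "D \<in> L1" "good D" and g: "g \<in> LaurentQ" and f: "S (inverse D ^ m) g \<in> LaurentQ"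
    and j: "j \<le> m"
  shows "S (inverse D ^ j) g \<in> LaurentQ"
proof -
  have D0: "D \<noteq> 0" using D by (simp add: good_def)
  obtain A r where Ar: "finite A" "\<forall>n. r n \<in> L1" "g = (\<Sum>n\<in>A. r n * X2 powi n)"
    using LQ_expand[OF g] by blast
  have rK: "\<And>n. r n \<in> K0" using Ar L1_K0 by blast
  obtain A' r' where Ar': "finite A'" "\<forall>n. r' n \<in> L1"
      "S (inverse D ^ m) g = (\<Sum>n\<in>A'. r' n * X2 powi n)"
    using LQ_expand[OF f] by blast
  have gm: "good (inverse D ^ m)" "good (inverse D ^ j)" using D by simp_all
  have se: "(\<Sum>n\<in>A. (r n * (inverse D ^ m) powi n) * X2 powi n) = (\<Sum>n\<in>A'. r' n * X2 powi n)"
    using Ar'(3) Ar(3) S_expand[OF gm(1), of A r] rK by simp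
  have k1: "\<And>n. n \<in> A \<Longrightarrow> r n * (inverse D ^ m) powi n \<in> K0" using rK D by (simp add: good_def)
  have k2: "\<And>n. n \<in> A' \<Longrightarrow> r' n \<in> K0" using Ar'(2) L1_K0 by blast
  have eq: "\<forall>n\<in>A. r n * (inverse D ^ m) powi n = (if n \<in> A' then r' n else 0)"
    by (rule coef_unique[OF Ar(1) Ar'(1) k1 k2 se])
  have cm: "\<And>n. n \<in> A \<Longrightarrow> r n * (inverse D ^ m) powi n \<in> L1" using eq Ar'(2) by simp
  have cj: "r n * (inverse D ^ j) powi n \<in> L1" if n: "n \<in> A" for n
  proof (cases "n \<ge> 0")
    case True
    then obtain N where N: "n = int N" by (metis nonneg_eq_int)
    have "D ^ (m * N) = D ^ (j * N) * D ^ ((m - j) * N)"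
      using j by (simp add: diff_mult_distrib flip: power_add)
    then have e0: "inverse (D ^ (j * N)) = inverse (D ^ (m * N)) * D ^ ((m - j) * N)"
      using D0 aux[of "D ^ ((m - j) * N)" "D ^ (j * N)"] by simp
    have e1: "(inverse D ^ j) powi n = inverse (D ^ (j * N))" by (simp only: N inv_powi_pos)
    have e2: "(inverse D ^ m) powi n = inverse (D ^ (m * N))" by (simp only: N inv_powi_pos)
    have ej: "r n * (inverse D ^ j) powi n = (r n * (inverse D ^ m) powi n) * D ^ ((m - j) * N)"
      by (simp only: e0 e1 e2 mult.assoc)
    show ?thesis unfolding ej by (rule L1_mult[OF cm[OF n] L1_power[OF D(1)]])
  next
    case False
    define N where "N = nat (- n)"
    have N: "n = - int N" using False by (simp add: N_def)
    have en: "r n * (inverse D ^ j) powi n = r n * D ^ (j * N)" by (simp only: N inv_powi_neg[OF D0])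
    show ?thesis unfolding en by (rule L1_mult[OF _ L1_power[OF D(1)]]) (use Ar(2) in blast)
  qed
  have "S (inverse D ^ j) g = (\<Sum>n\<in>A. (r n * (inverse D ^ j) powi n) * X2 powi n)"
    using Ar(3) S_expand[OF gm(2), of A r] rK by simp
  then show ?thesis using cj expand_LQ by simp
qed

lemma good_X1powi[simp]: "good (X1 powi c)" by (simp add: good_def)

lemma mono_LQ:
  assumes "g \<in> LaurentQ" shows "S (X1 powi c) g \<in> LaurentQ"
proof -
  obtain A r where Ar: "finite A" "\<forall>n. r n \<in> L1" "g = (\<Sum>n\<in>A. r n * X2 powi n)"
    using LQ_expand[OF assms] by blast
  have "S (X1 powi c) g = (\<Sum>n\<in>A. (r n * (X1 powi c) powi n) * X2 powi n)"
    using Ar S_expand[OF good_X1powi, of A r] L1_K0 by simp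
  also have "\<dots> = (\<Sum>n\<in>A. (r n * X1 powi (c * n)) * X2 powi n)"
    by (simp add: power_int_mult)
  finally show ?thesis using Ar expand_LQ by simp
qed



lemma cc_inj: "cc a = cc b \<Longrightarrow> a = b"
proof -
  assume "cc a = cc b"
  moreover have "cc (a - b) = cc a - cc b" by (simp add: cc_def)
  ultimately have "cc (a - b) = 0" by simp
  then show "a = b" by (simp add: cc_eq0)
qed

lemma X1pow_ne: "X1 ^ n \<noteq> - 1"
proof
  assume "X1 ^ n = - 1"
  then have "cc ([:0,1:] ^ n) = cc (- 1)" by (simp add: X1_cc cc_power cc_uminus)
  then have "[:0,1::complex:] ^ n = - 1" by (rule cc_inj)
  then have "poly ([:0,1::complex:] ^ n) 0 = poly (- 1) 0" by simp
  then show False by (cases n) simp_all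
qed

lemma D_ne0: "1 + X1 powi k \<noteq> 0"
proof
  assume h: "1 + X1 powi k = 0"
  show False
  proof (cases "k \<ge> 0")
    case True
    then have "X1 powi k = X1 ^ nat k" by (simp add: power_int_def)
    then show False using h X1pow_ne[of "nat k"] by (simp add: eq_neg_iff_add_eq_0 add.commute)
  next
    case False
    then have "X1 powi k = inverse (X1 ^ nat (- k))" by (simp add: power_int_def power_inverse)
    then have "X1 ^ nat (- k) = - 1" using h
      by (metis add.commute eq_neg_iff_add_eq_0 inverse_minus_eq inverse_inverse_eq inverse_1)
    then show False using X1pow_ne by blast
  qed
qed

lemma D_good: "good (1 + X1 powi k)" by (simp add: good_def D_ne0)

lemma D_L1: "1 + X1 powi k \<in> L1"
proof (cases "k \<ge> 0")
  case True
  then have "1 + X1 powi k = cc (1 + [:0,1:] ^ nat k) * X1 powi 0"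
    by (simp add: power_int_def X1_cc cc_add cc_power)
  then show ?thesis by (metis L1_I Q1_1 Q1_X Q1_add Q1_power)
next
  case False
  have "1 + X1 powi k = (X1 ^ nat (- k) + 1) * X1 powi k"
  proof -
    have "X1 ^ nat (- k) * X1 powi k = 1"
      using False by (simp add: power_int_def power_inverse)
    then show ?thesis by (simp add: distrib_right)
  qed
  also have "\<dots> = cc ([:0,1:] ^ nat (- k) + 1) * X1 powi k"
    by (simp add: X1_cc cc_add cc_power)
  finally show ?thesis by (metis L1_I Q1_1 Q1_X Q1_add Q1_power)
qed

lemma mu_pos: "mu k (0, 1) = S (inverse (1 + X1 powi k))"
  unfolding mu_def S_def Xmon_def omega_dual_def omega_def pairing_def
  by (simp add: power_int_minus)

lemma mu_neg: "mu k (0, -1) = S (1 + X1 powi (- k))"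
  unfolding mu_def S_def Xmon_def omega_dual_def omega_def pairing_def
  by simp

lemma mult_lem: "mult (replicate a (0, 1) @ replicate b (0, -1)) v =
   (if v = (0, 1) then a else if v = (0, -1) then b else 0)"
  by (auto simp: mult_def)

lemma UB: "upper_bound k (replicate a (0, 1) @ replicate b (0, -1)) =
  LaurentQ \<inter> (mu k (0, 1) ^^ a) ` LaurentQ \<inter> (mu k (0, -1) ^^ b) ` LaurentQ"
proof (rule set_eqI)
  fix x
  let ?V = "replicate a (0, 1) @ replicate b (0::int, -1::int)"
  show "x \<in> upper_bound k ?V \<longleftrightarrow> x \<in> LaurentQ \<inter> (mu k (0, 1) ^^ a) ` LaurentQ \<inter> (mu k (0, -1) ^^ b) ` LaurentQ"
  proof
    assume "x \<in> upper_bound k ?V"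
    then have hx: "x \<in> LaurentQ" and hv: "\<forall>v. x \<in> (mu k v ^^ mult ?V v) ` LaurentQ"
      unfolding upper_bound_def by auto
    show "x \<in> LaurentQ \<inter> (mu k (0, 1) ^^ a) ` LaurentQ \<inter> (mu k (0, -1) ^^ b) ` LaurentQ"
      using hx spec[OF hv, of "(0,1)"] spec[OF hv, of "(0,-1)"] by (simp add: mult_lem)
  next
    assume h: "x \<in> LaurentQ \<inter> (mu k (0, 1) ^^ a) ` LaurentQ \<inter> (mu k (0, -1) ^^ b) ` LaurentQ"
    have "\<forall>v. x \<in> (mu k v ^^ mult ?V v) ` LaurentQ"
    proof
      fix v show "x \<in> (mu k v ^^ mult ?V v) ` LaurentQ"
        using h by (cases "v = (0,1)"; cases "v = (0,-1)") (auto simp: mult_lem)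
    qed
    then show "x \<in> upper_bound k ?V" using h unfolding upper_bound_def by auto
  qed
qed



lemma X1_inv: "X1 powi (- k) * X1 powi k = 1"
  by (simp add: power_int_add flip: power_int_add)

lemma X1_inv2: "X1 powi k * X1 powi (- k) = 1"
  using X1_inv[of k] by (simp add: mult.commute)

theorem proposition3p7:
  fixes k :: int and m1 m2 :: nat
  assumes "k \<noteq> 0" and "m1 \<ge> 1"
  shows "upper_bound k (replicate m1 (0, 1) @ replicate m2 (0, -1))
       = mu k (0, 1) ` upper_bound k (replicate (m1 - 1) (0, 1) @ replicate (m2 + 1) (0, -1))"
proof -
  obtain n where n: "m1 = Suc n" using assms(2) by (cases m1) auto
  define D where "D = 1 + X1 powi k"
  define w1 where "w1 = inverse D"
  define w2 where "w2 = 1 + X1 powi (- k)"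
  have gD: "good D" unfolding D_def by (rule D_good)
  have LD: "D \<in> L1" unfolding D_def by (rule D_L1)
  have g1: "good w1" unfolding w1_def using gD by simp
  have g2: "good w2" unfolding w2_def by (rule D_good)
  have D0: "D \<noteq> 0" using gD by (simp add: good_def)
  have w2D: "w2 = D * X1 powi (- k)"
    unfolding w2_def D_def by (simp only: distrib_right mult_1_left X1_inv2 add.commute)
  have Dw2: "D = w2 * X1 powi k"
    unfolding w2_def D_def by (simp only: distrib_right mult_1_left X1_inv add.commute)
  have rel1: "w1 * w2 = X1 powi (- k)"
    unfolding w1_def w2D using D0 by simp
  let ?L = LaurentQ
  have LHS: "upper_bound k (replicate m1 (0, 1) @ replicate m2 (0, -1))
     = ?L \<inter> S (w1 ^ m1) ` ?L \<inter> S (w2 ^ m2) ` ?L"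
    unfolding UB mu_pos mu_neg S_funpow[OF g1[unfolded w1_def D_def]] S_funpow[OF g2[unfolded w2_def]]
    by (simp add: w1_def w2_def D_def)
  have RHS: "mu k (0, 1) ` upper_bound k (replicate (m1 - 1) (0, 1) @ replicate (m2 + 1) (0, -1))
     = S w1 ` (?L \<inter> S (w1 ^ n) ` ?L \<inter> S (w2 ^ Suc m2) ` ?L)"
    unfolding UB mu_pos mu_neg S_funpow[OF g1[unfolded w1_def D_def]] S_funpow[OF g2[unfolded w2_def]]
    by (simp add: w1_def w2_def D_def n)
  show ?thesis unfolding LHS RHS
  proof (rule set_eqI, rule iffI)
    fix f assume "f \<in> ?L \<inter> S (w1 ^ m1) ` ?L \<inter> S (w2 ^ m2) ` ?L"
    then obtain g g2 where f: "f \<in> ?L" "g \<in> ?L" "f = S (w1 ^ m1) g" "g2 \<in> ?L" "f = S (w2 ^ m2) g2"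
      by blast
    define h where "h = S (w1 ^ n) g"
    have fh: "f = S w1 h" unfolding h_def f(3) n using g1 by (simp add: S_comp)
    have hL: "h \<in> ?L" unfolding h_def w1_def
      by (rule convex[OF LD gD f(2), of m1]) (use f n in \<open>simp_all add: w1_def\<close>)
    have "h = S (inverse w1) f" unfolding fh using g1 by (simp add: S_comp S_one good_def)
    also have "\<dots> = S (inverse w1 * w2 ^ m2) g2" unfolding f(5) using g1 g2 by (simp add: S_comp)
    also have "inverse w1 * w2 ^ m2 = w2 ^ Suc m2 * X1 powi k"
      unfolding w1_def using D0 Dw2 by (simp add: mult_ac)
    also have "S \<dots> g2 = S (w2 ^ Suc m2) (S (X1 powi k) g2)" using g2 by (simp add: S_comp)
    finally have "h \<in> S (w2 ^ Suc m2) ` ?L" using mono_LQ[OF f(4)] by blast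
    then show "f \<in> S w1 ` (?L \<inter> S (w1 ^ n) ` ?L \<inter> S (w2 ^ Suc m2) ` ?L)"
      using fh hL f(2) h_def by blast
  next
    fix f assume "f \<in> S w1 ` (?L \<inter> S (w1 ^ n) ` ?L \<inter> S (w2 ^ Suc m2) ` ?L)"
    then obtain h g g2 where h: "f = S w1 h" "h \<in> ?L" "g \<in> ?L" "h = S (w1 ^ n) g" "g2 \<in> ?L"
       "h = S (w2 ^ Suc m2) g2"
      by blast
    have f1: "f = S (w1 ^ m1) g" unfolding h(1) h(4) n using g1 by (simp add: S_comp)
    have "f = S (w1 * w2 ^ Suc m2) g2" unfolding h(1) h(6) using g1 g2 by (simp add: S_comp)
    also have "w1 * w2 ^ Suc m2 = w2 ^ m2 * X1 powi (- k)" using rel1 by (simp add: mult_ac)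
    also have "S \<dots> g2 = S (w2 ^ m2) (S (X1 powi (- k)) g2)" using g2 by (simp add: S_comp)
    finally have f2: "f \<in> S (w2 ^ m2) ` ?L" using mono_LQ[OF h(5)] by blast
    have "S (w1 ^ Suc m2) h = S ((w1 * w2) ^ Suc m2) g2" unfolding h(6) using g1 g2
      by (simp add: S_comp power_mult_distrib mult_ac)
    also have "(w1 * w2) ^ Suc m2 = X1 powi (- k * int (Suc m2))"
      unfolding rel1 by (subst power_int_mult) (simp only: power_int_of_nat)
    finally have "S (inverse D ^ Suc m2) h \<in> ?L" using mono_LQ[OF h(5)] by (simp add: w1_def)
    then have "S (inverse D ^ 1) h \<in> ?L" by (rule convex[OF LD gD h(2)]) simp
    then have "f \<in> ?L" using h(1) by (simp add: w1_def)
    then show "f \<in> ?L \<inter> S (w1 ^ m1) ` ?L \<inter> S (w2 ^ m2) ` ?L" using f1 f2 h(3) by blast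
  qed
qed

end
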